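(* Let $(V,\mathcal{E})$ be a forward neutral genealogy model. For each $n$, the random vector $(\mathcal{T}(v))_{v\in V_n}$ is exchangeable.
   Context: Data: $\tau\in\mathbb{N}\cup\{\infty\}$, positive integers $(X_n)_{n<\tau}$, vectors $k_n=(k_n(i))_{i=1}^{X_n}$ of nonnegative integers with $\sum_ik_n(i)=X_{n+1}$. $V_n=\{(n,i):1\le i\le X_n\}$. A genealogy model is a random edge set $\mathcal{E}\subset\bigcup_nV_n\times V_{n+1}$ such that each vertex of $V_{n+1}$ has exactly one parent in $V_n$ and the out-degrees in $V_n$ are a permutation of $k_n$. $\mathcal{E}_n=\mathcal{E}\cap(V_n\times V_{n+1})$, $K_n=(\mathrm{od}((n,i)))_i$. Forward neutral: for all $n$, $K_n$ is exchangeable and independent of $(\mathcal{E}_m)_{m<n}$. For $v\in V_n$, $D(v)$ is the set of vertices reachable from $v$ by a directed path in $\mathcal{E}$ (including $v$), and $\mathcal{T}(v)$ is the subgraph induced by $D(v)$, taken modulo isomorphism of directed graphs. *)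

theory Defs
  imports "HOL-Probability.Probability" "HOL-Library.Extended_Nat"
begin

type_synonym vertex = "nat \<times> nat"
type_synonym edges = "(vertex \<times> vertex) set"

definition gen :: "(nat \<Rightarrow> nat) \<Rightarrow> nat \<Rightarrow> vertex set" where
  "gen X n = {(n, i) | i. 1 \<le> i \<and> i \<le> X n}"

definition outdeg :: "edges \<Rightarrow> vertex \<Rightarrow> nat" where
  "outdeg E v = card {w. (v, w) \<in> E}"

definition genealogy :: "enat \<Rightarrow> (nat \<Rightarrow> nat) \<Rightarrow> (nat \<Rightarrow> nat \<Rightarrow> nat) \<Rightarrow> edges \<Rightarrow> bool" where
  "genealogy \<tau> X k E \<longleftrightarrow>
     E \<subseteq> (\<Union>n\<in>{n. enat (Suc n) < \<tau>}. gen X n \<times> gen X (Suc n)) \<and>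
     (\<forall>n. enat (Suc n) < \<tau> \<longrightarrow> (\<forall>w\<in>gen X (Suc n). \<exists>!u. (u, w) \<in> E)) \<and>
     (\<forall>n. enat (Suc n) < \<tau> \<longrightarrow>
        (\<exists>\<sigma>. \<sigma> permutes {1..X n} \<and> (\<forall>i\<in>{1..X n}. outdeg E (n, i) = k n (\<sigma> i))))"

definition edge_space :: "edges measure" where
  "edge_space = sigma UNIV (range (\<lambda>e. {E. e \<in> E}))"

definition edges_before :: "(nat \<Rightarrow> nat) \<Rightarrow> nat \<Rightarrow> edges \<Rightarrow> edges" where
  "edges_before X n E = E \<inter> (\<Union>m<n. gen X m \<times> gen X (Suc m))"

definition Kvec :: "(nat \<Rightarrow> nat) \<Rightarrow> nat \<Rightarrow> edges \<Rightarrow> nat \<Rightarrow> nat" where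
  "Kvec X n E = (\<lambda>i. if i \<in> {1..X n} then outdeg E (n, i) else 0)"

definition forward_neutral ::
  "'w measure \<Rightarrow> enat \<Rightarrow> (nat \<Rightarrow> nat) \<Rightarrow> ('w \<Rightarrow> edges) \<Rightarrow> bool" where
  "forward_neutral M \<tau> X \<E> \<longleftrightarrow>
     (\<forall>n. enat n < \<tau> \<longrightarrow>
        \<comment> \<open>K_n is exchangeable\<close>
        (\<forall>\<pi> \<kappa>. \<pi> permutes {1..X n} \<longrightarrow>
            measure M {\<omega>\<in>space M. Kvec X n (\<E> \<omega>) = \<kappa>}
          = measure M {\<omega>\<in>space M. (\<lambda>i. Kvec X n (\<E> \<omega>) (\<pi> i)) = \<kappa>}) \<and>
        \<comment> \<open>K_n is independent of (E_m)_{m<n}\<close>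
        (\<forall>\<kappa> S.
            measure M {\<omega>\<in>space M. Kvec X n (\<E> \<omega>) = \<kappa> \<and> edges_before X n (\<E> \<omega>) = S}
          = measure M {\<omega>\<in>space M. Kvec X n (\<E> \<omega>) = \<kappa>}
            * measure M {\<omega>\<in>space M. edges_before X n (\<E> \<omega>) = S}))"

definition desc :: "edges \<Rightarrow> vertex \<Rightarrow> vertex set" where
  "desc E v = {w. (v, w) \<in> E\<^sup>*}"

definition subtree :: "edges \<Rightarrow> vertex \<Rightarrow> vertex set \<times> edges" where
  "subtree E v = (desc E v, E \<inter> (desc E v \<times> desc E v))"

definition digraph_iso :: "('a set \<times> ('a \<times> 'a) set) \<Rightarrow> ('a set \<times> ('a \<times> 'a) set) \<Rightarrow> bool" where
  "digraph_iso G H \<longleftrightarrow> (\<exists>f. bij_betw f (fst G) (fst H) \<and>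
      (\<forall>x\<in>fst G. \<forall>y\<in>fst G. (x, y) \<in> snd G \<longleftrightarrow> (f x, f y) \<in> snd H))"

definition iso_class :: "('a set \<times> ('a \<times> 'a) set) \<Rightarrow> ('a set \<times> ('a \<times> 'a) set) set" where
  "iso_class G = {H. snd H \<subseteq> fst H \<times> fst H \<and> digraph_iso G H}"

definition tree_vec :: "(nat \<Rightarrow> nat) \<Rightarrow> nat \<Rightarrow> edges \<Rightarrow> vertex \<Rightarrow> (vertex set \<times> edges) set" where
  "tree_vec X n E = (\<lambda>v. if v \<in> gen X n then iso_class (subtree E v) else {})"

definition exchangeable_vec ::
  "'w measure \<Rightarrow> 'b measure \<Rightarrow> 'i set \<Rightarrow> ('b \<Rightarrow> 'i \<Rightarrow> 'v) \<Rightarrow> ('w \<Rightarrow> 'b) \<Rightarrow> bool" where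
  "exchangeable_vec M B I Y Z \<longleftrightarrow>
     (\<forall>\<pi> A. \<pi> permutes I \<longrightarrow>
        {b\<in>space B. Y b \<in> A} \<in> sets B \<longrightarrow>
        {b\<in>space B. (\<lambda>i. Y b (\<pi> i)) \<in> A} \<in> sets B \<longrightarrow>
        measure M {\<omega>\<in>space M. Y (Z \<omega>) \<in> A}
          = measure M {\<omega>\<in>space M. (\<lambda>i. Y (Z \<omega>) (\<pi> i)) \<in> A})"

end

theory Submission
  imports Defs
begin

lemma sets_edge_space: "sets edge_space = sigma_sets UNIV (range (\<lambda>e. {E. e \<in> E}))"
  unfolding edge_space_def by (rule sets_measure_of) auto

lemma space_edge_space[simp]: "space edge_space = UNIV"
  unfolding edge_space_def by (rule space_measure_of) auto

lemma edge_gen_sets: "{b. e \<in> b} \<in> sets edge_space"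
  unfolding sets_edge_space by (auto intro: sigma_sets.Basic)

lemma edge_gen_compl: "UNIV - {b. e \<in> b} \<in> sets edge_space"
  by (metis sets.compl_sets space_edge_space edge_gen_sets)

lemma fin_dep_sets:
  assumes "finite U"
  shows "{b. g (b \<inter> U)} \<in> sets edge_space"
proof -
  have cell: "{b. b \<inter> U = T} \<in> sets edge_space" if "T \<subseteq> U" for T
  proof (cases "U = {}")
    case True
    then have "{b. b \<inter> U = T} = space edge_space" using that by auto
    then show ?thesis by (metis sets.top)
  next
    case False
    have "{b. b \<inter> U = T} = (\<Inter>e\<in>U. if e \<in> T then {b. e \<in> b} else space edge_space - {b. e\<in>b})"
      using that by auto
    also have "\<dots> \<in> sets edge_space"
      using False assms by (intro sets.finite_INT) (auto intro: edge_gen_sets edge_gen_compl)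
    finally show ?thesis .
  qed
  have eq: "{b. g (b \<inter> U)} = \<Union>((\<lambda>T. {b. b \<inter> U = T}) ` {T. T \<subseteq> U \<and> g T})" by auto
  show ?thesis unfolding eq
    using assms cell by (intro sets.finite_Union) auto
qed

definition fgen :: "edges set set" where
  "fgen = (\<lambda>F. {b. F \<subseteq> b}) ` {F. finite F}"

lemma sets_edge_space_fgen: "sets edge_space = sigma_sets UNIV fgen"
  unfolding sets_edge_space
proof (rule sigma_sets_eqI)
  fix a :: "edges set" assume "a \<in> range (\<lambda>e. {E. e \<in> E})"
  then obtain e where "a = {b. {e} \<subseteq> b}" by auto
  moreover have "{b. {e} \<subseteq> b} \<in> fgen" unfolding fgen_def by (rule image_eqI[where x="{e}"]) auto
  ultimately show "a \<in> sigma_sets UNIV fgen" by (auto intro: sigma_sets.Basic)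
next
  fix a :: "edges set" assume "a \<in> fgen"
  then obtain F where F: "finite F" "a = {b. F \<subseteq> b}" unfolding fgen_def by auto
  then have "a = {b. F \<subseteq> b \<inter> F}" by auto
  then have "a \<in> sets edge_space" using fin_dep_sets[OF F(1), of "\<lambda>c. F \<subseteq> c"] by simp
  then show "a \<in> sigma_sets UNIV (range (\<lambda>e. {E. e \<in> E}))" unfolding sets_edge_space .
qed

lemma prob_eq_edge_space:
  assumes "prob_space P" "prob_space Q" "sets P = sets edge_space" "sets Q = sets edge_space"
    and "\<And>F. finite F \<Longrightarrow> measure P {b. F \<subseteq> b} = measure Q {b. F \<subseteq> b}"
  shows "P = Q"
proof (rule measure_eqI_generator_eq[where E=fgen and \<Omega>=UNIV and A="\<lambda>_. UNIV"])
  show "Int_stable fgen" unfolding Int_stable_def fgen_def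
  proof (safe)
    fix F G :: edges assume "finite F" "finite G"
    then show "{b. F \<subseteq> b} \<inter> {b. G \<subseteq> b} \<in> (\<lambda>F. {b. F \<subseteq> b}) ` {F. finite F}"
      by (intro image_eqI[where x="F \<union> G"]) auto
  qed
  show "fgen \<subseteq> Pow UNIV" by auto
  fix X assume "X \<in> fgen"
  then obtain F where F: "finite F" "X = {b. F \<subseteq> b}" unfolding fgen_def by auto
  interpret p: prob_space P by fact
  interpret q: prob_space Q by fact
  have "X \<in> sets P" "X \<in> sets Q" using assms(3,4) sets_edge_space_fgen F
    by (auto simp: fgen_def intro!: sigma_sets.Basic)
  then show "emeasure P X = emeasure Q X"
    using assms(5)[OF F(1)] F by (simp add: p.emeasure_eq_measure q.emeasure_eq_measure)
next
  show "sets P = sigma_sets UNIV fgen" "sets Q = sigma_sets UNIV fgen"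
    using assms sets_edge_space_fgen by auto
  show "range (\<lambda>_. UNIV) \<subseteq> fgen" unfolding fgen_def by (auto intro!: image_eqI[where x="{}"])
  show "\<Union> (range (\<lambda>_. UNIV)) = UNIV" by simp
  fix i
  interpret p: prob_space P by fact
  show "emeasure P UNIV \<noteq> \<infinity>" by simp
qed


lemma mem_gen[simp]: "(a, i) \<in> gen X m \<longleftrightarrow> a = m \<and> i \<in> {1..X m}"
  unfolding gen_def by auto

lemma finite_gen[simp]: "finite (gen X m)"
proof -
  have "gen X m = (\<lambda>i. (m, i)) ` {1..X m}" unfolding gen_def by auto
  then show ?thesis by simp
qed

definition levelok :: "(nat \<Rightarrow> nat) \<Rightarrow> nat \<Rightarrow> (nat \<Rightarrow> nat) \<Rightarrow> edges \<Rightarrow> bool" where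
  "levelok X m \<delta> L \<longleftrightarrow> L \<subseteq> gen X m \<times> gen X (Suc m) \<and> (\<forall>i\<in>{1..X m}. outdeg L (m, i) = \<delta> i)
     \<and> (\<forall>w\<in>gen X (Suc m). \<exists>!u. (u, w) \<in> L)"

definition mapE :: "(nat \<Rightarrow> nat) \<Rightarrow> (nat \<Rightarrow> nat) \<Rightarrow> edges \<Rightarrow> edges" where
  "mapE p q L = (\<lambda>((a, i), (c, j)). ((a, p i), (c, q j))) ` L"

definition par :: "nat \<Rightarrow> edges \<Rightarrow> nat \<Rightarrow> nat" where
  "par m L j = (THE i. ((m, i), (Suc m, j)) \<in> L)"

lemma levelok_par:
  assumes "levelok X m \<delta> L" "j \<in> {1..X (Suc m)}"
  shows "par m L j \<in> {1..X m}" "((m, par m L j), (Suc m, j)) \<in> L"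
proof -
  have sub: "L \<subseteq> gen X m \<times> gen X (Suc m)" using assms(1) unfolding levelok_def by blast
  have "(Suc m, j) \<in> gen X (Suc m)" using assms(2) by simp
  then have u: "\<exists>!u. (u, (Suc m, j)) \<in> L" using assms(1) unfolding levelok_def by blast
  then obtain u where u1: "(u, (Suc m, j)) \<in> L" and u2: "\<And>u'. (u', (Suc m, j)) \<in> L \<Longrightarrow> u' = u" by blast
  obtain a i where ui: "u = (a, i)" by force
  have "u \<in> gen X m" using sub u1 by blast
  then have ai: "a = m" "i \<in> {1..X m}" using ui by auto
  have "par m L j = i" unfolding par_def
  proof (rule the_equality)
    show "((m, i), (Suc m, j)) \<in> L" using u1 ui ai by simp
    fix i' assume "((m, i'), (Suc m, j)) \<in> L"
    then have "(m, i') = u" by (rule u2)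
    then show "i' = i" using ui by simp
  qed
  then show "par m L j \<in> {1..X m}" "((m, par m L j), (Suc m, j)) \<in> L" using ai u1 ui by simp_all
qed

lemma levelok_par_eq:
  assumes "levelok X m \<delta> L" "((m, i), (Suc m, j)) \<in> L"
  shows "par m L j = i"
proof -
  have sub: "L \<subseteq> gen X m \<times> gen X (Suc m)" using assms(1) unfolding levelok_def by blast
  then have j: "j \<in> {1..X (Suc m)}" using assms(2) by auto
  have "(Suc m, j) \<in> gen X (Suc m)" using j by simp
  then have "\<exists>!u. (u, (Suc m, j)) \<in> L" using assms(1) unfolding levelok_def by blast
  then show ?thesis using assms(2) levelok_par[OF assms(1) j] by blast
qed

lemma levelok_card:
  assumes "levelok X m \<delta> L" "i \<in> {1..X m}"
  shows "card {j \<in> {1..X (Suc m)}. par m L j = i} = \<delta> i"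
proof -
  have sub: "L \<subseteq> gen X m \<times> gen X (Suc m)" using assms(1) unfolding levelok_def by blast
  have "{w. ((m, i), w) \<in> L} = (\<lambda>j. (Suc m, j)) ` {j \<in> {1..X (Suc m)}. par m L j = i}"
  proof (intro set_eqI iffI)
    fix w assume w: "w \<in> {w. ((m, i), w) \<in> L}"
    then obtain c j where "w = (c, j)" by force
    with w sub have "c = Suc m" "j \<in> {1..X (Suc m)}" "((m, i), (Suc m, j)) \<in> L" by auto
    then show "w \<in> (\<lambda>j. (Suc m, j)) ` {j \<in> {1..X (Suc m)}. par m L j = i}"
      using levelok_par_eq[OF assms(1)] \<open>w = (c, j)\<close> by auto
  next
    fix w assume "w \<in> (\<lambda>j. (Suc m, j)) ` {j \<in> {1..X (Suc m)}. par m L j = i}"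
    then show "w \<in> {w. ((m, i), w) \<in> L}" using levelok_par[OF assms(1)] by auto
  qed
  then have "outdeg L (m, i) = card {j \<in> {1..X (Suc m)}. par m L j = i}"
    unfolding outdeg_def by (simp add: card_image inj_on_def)
  moreover have "outdeg L (m, i) = \<delta> i" using assms unfolding levelok_def by blast
  ultimately show ?thesis by simp
qed

lemma glue:
  assumes L1: "levelok X m \<delta> L1" and L2: "levelok X m \<delta> L2"
  shows "\<exists>q. q permutes {1..X (Suc m)} \<and> mapE id q L1 = L2"
proof -
  define Y where "Y = {1..X (Suc m)}"
  define I where "I = {1..X m}"
  define A where "A i = {j \<in> Y. par m L1 j = i}" for i
  define B where "B i = {j \<in> Y. par m L2 j = i}" for i
  have "\<forall>i\<in>I. \<exists>h. bij_betw h (A i) (B i)"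
  proof
    fix i assume "i \<in> I"
    then have "card (A i) = card (B i)"
      using levelok_card[OF L1] levelok_card[OF L2] unfolding A_def B_def I_def Y_def by simp
    moreover have "finite (A i)" "finite (B i)" unfolding A_def B_def Y_def by auto
    ultimately show "\<exists>h. bij_betw h (A i) (B i)" by (intro finite_same_card_bij)
  qed
  then obtain g where g: "\<And>i. i \<in> I \<Longrightarrow> bij_betw (g i) (A i) (B i)" by metis
  define f where "f j = g (par m L1 j) j" for j
  have p1: "j \<in> Y \<Longrightarrow> par m L1 j \<in> I" for j using levelok_par(1)[OF L1] unfolding Y_def I_def by auto
  have p2: "j \<in> Y \<Longrightarrow> par m L2 j \<in> I" for j using levelok_par(1)[OF L2] unfolding Y_def I_def by auto
  have fB: "j \<in> Y \<Longrightarrow> f j \<in> B (par m L1 j)" for j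
    using g[OF p1] unfolding f_def A_def by (auto simp: bij_betw_def)
  have bf: "bij_betw f Y Y"
    unfolding bij_betw_def
  proof (intro conjI inj_onI subset_antisym subsetI)
    fix j j' assume jj: "j \<in> Y" "j' \<in> Y" "f j = f j'"
    have "par m L2 (f j) = par m L1 j" "par m L2 (f j') = par m L1 j'"
      using fB[OF jj(1)] fB[OF jj(2)] unfolding B_def by simp_all
    then have pe: "par m L1 j = par m L1 j'" using jj(3) by simp
    define i where "i = par m L1 j"
    have inA: "j \<in> A i" "j' \<in> A i" using jj pe unfolding A_def i_def by simp_all
    have "inj_on (g i) (A i)" using g[OF p1[OF jj(1)]] unfolding i_def bij_betw_def by simp
    moreover have "g i j = g i j'" using jj(3) pe unfolding f_def i_def by simp
    ultimately show "j = j'" using inA by (rule inj_onD)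
  next
    fix y assume "y \<in> f ` Y"
    then obtain j where "j \<in> Y" "y = f j" by blast
    then show "y \<in> Y" using fB[of j] unfolding B_def by simp
  next
    fix y assume y: "y \<in> Y"
    let ?i = "par m L2 y"
    have yB: "y \<in> B ?i" using y unfolding B_def by simp
    have "g ?i ` A ?i = B ?i" using g[OF p2[OF y]] unfolding bij_betw_def by simp
    with yB have "y \<in> g ?i ` A ?i" by simp
    then obtain j where "j \<in> A ?i" "g ?i j = y" by (metis imageE)
    then have jY: "j \<in> Y" "par m L1 j = ?i" unfolding A_def by simp_all
    then have "f j = y" using \<open>g ?i j = y\<close> unfolding f_def by simp
    with jY(1) show "y \<in> f ` Y" by blast
  qed
  define q where "q j = (if j \<in> Y then f j else j)" for j
  have bq: "bij_betw q Y Y" using bf by (rule bij_betw_cong[THEN iffD1, rotated]) (simp add: q_def)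
  have qp: "q permutes Y" by (rule bij_imp_permutes[OF bq]) (simp add: q_def)
  have s1: "L1 \<subseteq> gen X m \<times> gen X (Suc m)" using L1 unfolding levelok_def by blast
  have s2: "L2 \<subseteq> gen X m \<times> gen X (Suc m)" using L2 unfolding levelok_def by blast
  have "mapE id q L1 = L2"
  proof (intro subset_antisym subsetI)
    fix e assume "e \<in> mapE id q L1"
    then obtain x where x: "x \<in> L1" "e = (\<lambda>((a, i), (c, j)). ((a, id i), (c, q j))) x"
      unfolding mapE_def by blast
    obtain a i c j where xx: "x = ((a, i), (c, j))" by (metis prod.collapse)
    have "(a, i) \<in> gen X m" "(c, j) \<in> gen X (Suc m)" using s1 x(1) xx by blast+
    then have acj: "a = m" "c = Suc m" "j \<in> Y" unfolding Y_def by simp_all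
    have e: "((m, i), (Suc m, j)) \<in> L1" "e = ((m, i), (Suc m, q j))"
      using x xx acj by simp_all
    have j: "j \<in> Y" by fact
    have "par m L1 j = i" using levelok_par_eq[OF L1 e(1)] .
    then have "q j \<in> B i" using fB[OF j] j by (simp add: q_def)
    then have "par m L2 (q j) = i" "q j \<in> {1..X (Suc m)}" unfolding B_def Y_def by simp_all
    then show "e \<in> L2" using levelok_par(2)[OF L2, of "q j"] e(2) by simp
  next
    fix e assume e: "e \<in> L2"
    obtain a i c y where xx: "e = ((a, i), (c, y))" by (metis prod.collapse)
    have "(a, i) \<in> gen X m" "(c, y) \<in> gen X (Suc m)" using s2 e xx by blast+
    then have acj: "a = m" "c = Suc m" "y \<in> Y" unfolding Y_def by simp_all
    have e2: "e = ((m, i), (Suc m, y))" "y \<in> Y" using xx acj by simp_all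
    have pi: "par m L2 y = i" using levelok_par_eq[OF L2] e e2(1) by simp
    have "y \<in> f ` Y" using bf e2(2) unfolding bij_betw_def by simp
    then obtain j where j: "j \<in> Y" "f j = y" by blast
    have "par m L1 j = i" using fB[OF j(1)] j(2) pi unfolding B_def by simp
    then have "((m, i), (Suc m, j)) \<in> L1" using levelok_par(2)[OF L1, of j] j(1) unfolding Y_def by simp
    moreover have "e = (\<lambda>((a, i), (c, j)). ((a, id i), (c, q j))) ((m, i), (Suc m, j))"
      using e2 j by (simp add: q_def)
    ultimately show "e \<in> mapE id q L1" unfolding mapE_def by blast
  qed
  then show ?thesis using qp unfolding Y_def by blast
qed


lemma digraph_iso_sym: "digraph_iso G H \<Longrightarrow> digraph_iso H G"
proof -
  assume "digraph_iso G H"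
  then obtain f where f: "bij_betw f (fst G) (fst H)"
    "\<forall>x\<in>fst G. \<forall>y\<in>fst G. (x, y) \<in> snd G \<longleftrightarrow> (f x, f y) \<in> snd H"
    unfolding digraph_iso_def by blast
  let ?g = "inv_into (fst G) f"
  have g: "bij_betw ?g (fst H) (fst G)" using f(1) by (rule bij_betw_inv_into)
  have "\<forall>x\<in>fst H. \<forall>y\<in>fst H. (x, y) \<in> snd H \<longleftrightarrow> (?g x, ?g y) \<in> snd G"
  proof (intro ballI)
    fix x y assume xy: "x \<in> fst H" "y \<in> fst H"
    have "?g x \<in> fst G" "?g y \<in> fst G" using g xy by (auto simp: bij_betw_def)
    moreover have "f (?g x) = x" "f (?g y) = y" using f(1) xy
      by (auto simp: bij_betw_def f_inv_into_f)
    ultimately show "(x, y) \<in> snd H \<longleftrightarrow> (?g x, ?g y) \<in> snd G" using f(2) by metis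
  qed
  with g show ?thesis unfolding digraph_iso_def by blast
qed

lemma digraph_iso_trans: "digraph_iso G H \<Longrightarrow> digraph_iso H K \<Longrightarrow> digraph_iso G K"
proof -
  assume "digraph_iso G H" "digraph_iso H K"
  then obtain f g where f: "bij_betw f (fst G) (fst H)"
    "\<forall>x\<in>fst G. \<forall>y\<in>fst G. (x, y) \<in> snd G \<longleftrightarrow> (f x, f y) \<in> snd H"
    and g: "bij_betw g (fst H) (fst K)"
    "\<forall>x\<in>fst H. \<forall>y\<in>fst H. (x, y) \<in> snd H \<longleftrightarrow> (g x, g y) \<in> snd K"
    unfolding digraph_iso_def by blast
  have "bij_betw (g \<circ> f) (fst G) (fst K)" using f(1) g(1) by (rule bij_betw_trans)
  moreover have "\<forall>x\<in>fst G. \<forall>y\<in>fst G. (x, y) \<in> snd G \<longleftrightarrow> ((g \<circ> f) x, (g \<circ> f) y) \<in> snd K"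
  proof (intro ballI)
    fix x y assume xy: "x \<in> fst G" "y \<in> fst G"
    then have "f x \<in> fst H" "f y \<in> fst H" using f(1) by (auto simp: bij_betw_def)
    then show "(x, y) \<in> snd G \<longleftrightarrow> ((g \<circ> f) x, (g \<circ> f) y) \<in> snd K"
      using f(2) g(2) xy by simp
  qed
  ultimately show ?thesis unfolding digraph_iso_def by blast
qed

lemma iso_class_eq: "digraph_iso G H \<Longrightarrow> iso_class G = iso_class H"
  unfolding iso_class_def using digraph_iso_sym digraph_iso_trans by blast

definition mapV :: "('a \<Rightarrow> 'b) \<Rightarrow> ('a \<times> 'a) set \<Rightarrow> ('b \<times> 'b) set" where
  "mapV R E = (\<lambda>(u, w). (R u, R w)) ` E"

lemma mapV_rtrancl: "(u, w) \<in> E\<^sup>* \<Longrightarrow> (f u, f w) \<in> (mapV f E)\<^sup>*"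
proof (induction rule: rtrancl_induct)
  case base then show ?case by simp
next
  case (step y z)
  have "(f y, f z) \<in> mapV f E" using step(2) unfolding mapV_def by force
  with step(3) show ?case by (rule rtrancl_into_rtrancl)
qed

lemma mapV_inv: "bij R \<Longrightarrow> mapV (inv R) (mapV R E) = E"
  unfolding mapV_def by (force simp: bij_def image_iff)

lemma mapV_rtrancl_iff: "bij R \<Longrightarrow> (R u, R w) \<in> (mapV R E)\<^sup>* \<longleftrightarrow> (u, w) \<in> E\<^sup>*"
proof
  assume b: "bij R" and "(R u, R w) \<in> (mapV R E)\<^sup>*"
  have "(inv R (R u), inv R (R w)) \<in> (mapV (inv R) (mapV R E))\<^sup>*"
    using \<open>(R u, R w) \<in> (mapV R E)\<^sup>*\<close> by (rule mapV_rtrancl)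
  then show "(u, w) \<in> E\<^sup>*" using b by (simp add: mapV_inv bij_is_inj)
qed (rule mapV_rtrancl)

lemma desc_mapV: "bij R \<Longrightarrow> desc (mapV R E) (R v) = R ` desc E v"
proof -
  assume b: "bij R"
  have "x \<in> desc (mapV R E) (R v) \<longleftrightarrow> x \<in> R ` desc E v" for x
  proof -
    obtain y where x: "x = R y" using b by (metis bij_pointE)
    show ?thesis unfolding desc_def x using mapV_rtrancl_iff[OF b] b
      by (auto simp: bij_is_inj inj_image_mem_iff)
  qed
  then show ?thesis by blast
qed

lemma subtree_mapV_iso:
  assumes b: "bij R"
  shows "digraph_iso (subtree E v) (subtree (mapV R E) (R v))"
  unfolding digraph_iso_def subtree_def fst_conv snd_conv
proof (intro exI conjI ballI)
  show "bij_betw R (desc E v) (desc (mapV R E) (R v))"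
    using b by (simp add: desc_mapV bij_betw_subset)
  fix x y assume "x \<in> desc E v" "y \<in> desc E v"
  then show "((x, y) \<in> E \<inter> desc E v \<times> desc E v) =
           ((R x, R y) \<in> mapV R E \<inter> desc (mapV R E) (R v) \<times> desc (mapV R E) (R v))"
    unfolding desc_mapV[OF b] using b by (auto simp: mapV_def bij_is_inj inj_image_mem_iff inj_eq)
qed


definition lvl :: "(nat \<Rightarrow> nat) \<Rightarrow> nat \<Rightarrow> edges \<Rightarrow> edges" where
  "lvl X m b = b \<inter> (gen X m \<times> gen X (Suc m))"

lemma genealogy_edge:
  assumes "genealogy \<tau> X kk b" "e \<in> b"
  shows "\<exists>m i j. e = ((m, i), (Suc m, j)) \<and> enat (Suc m) < \<tau> \<and> i \<in> {1..X m} \<and> j \<in> {1..X (Suc m)}"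
proof -
  have "b \<subseteq> (\<Union>n\<in>{n. enat (Suc n) < \<tau>}. gen X n \<times> gen X (Suc n))"
    using assms(1) unfolding genealogy_def by blast
  then obtain m where m: "enat (Suc m) < \<tau>" "e \<in> gen X m \<times> gen X (Suc m)" using assms(2) by blast
  obtain a i c j where e: "e = ((a, i), (c, j))" by (metis prod.collapse)
  show ?thesis using m e by auto
qed

lemma genealogy_lvl_empty:
  assumes "genealogy \<tau> X kk b" "\<not> enat (Suc m) < \<tau>"
  shows "lvl X m b = {}"
proof (rule equals0I)
  fix e assume e: "e \<in> lvl X m b"
  then have eb: "e \<in> b" and eg: "e \<in> gen X m \<times> gen X (Suc m)" unfolding lvl_def by auto
  obtain m' i j where m': "e = ((m', i), (Suc m', j))" "enat (Suc m') < \<tau>"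
    using genealogy_edge[OF assms(1) eb] by blast
  then have "m' = m" using eg by simp
  then show False using m' assms(2) by simp
qed

lemma genealogy_outdeg_lvl:
  assumes "genealogy \<tau> X kk b"
  shows "outdeg (lvl X m b) (m, i) = outdeg b (m, i)"
proof -
  have "{w. ((m, i), w) \<in> lvl X m b} = {w. ((m, i), w) \<in> b}"
  proof (intro set_eqI iffI)
    fix w assume "w \<in> {w. ((m, i), w) \<in> b}"
    then have wb: "((m, i), w) \<in> b" by simp
    obtain m' i' j where m': "((m, i), w) = ((m', i'), (Suc m', j))" "i' \<in> {1..X m'}" "j \<in> {1..X (Suc m')}"
      using genealogy_edge[OF assms wb] by blast
    then show "w \<in> {w. ((m, i), w) \<in> lvl X m b}" using wb unfolding lvl_def by auto
  qed (simp add: lvl_def)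
  then show ?thesis unfolding outdeg_def by simp
qed

lemma genealogy_Kvec_lvl:
  assumes "genealogy \<tau> X kk b"
  shows "Kvec X m (lvl X m b) = Kvec X m b"
  unfolding Kvec_def by (rule ext) (simp add: genealogy_outdeg_lvl[OF assms])

lemma genealogy_Kvec_zero:
  assumes "genealogy \<tau> X kk b" "\<not> enat (Suc m) < \<tau>"
  shows "Kvec X m b = (\<lambda>_. 0)"
proof -
  have "Kvec X m b = Kvec X m (lvl X m b)" using genealogy_Kvec_lvl[OF assms(1)] by simp
  also have "\<dots> = (\<lambda>_. 0)" unfolding Kvec_def outdeg_def genealogy_lvl_empty[OF assms] by (rule ext) simp
  finally show ?thesis .
qed

lemma genealogy_fst:
  assumes "genealogy \<tau> X kk b" "(u, w) \<in> b"
  shows "fst w = Suc (fst u)"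
  using genealogy_edge[OF assms] by auto

lemma genealogy_rtrancl_fst:
  assumes "genealogy \<tau> X kk b" "(v, w) \<in> b\<^sup>*"
  shows "fst v \<le> fst w"
  using assms(2)
proof (induction rule: rtrancl_induct)
  case base then show ?case by simp
next
  case (step y z) then show ?case using genealogy_fst[OF assms(1) step(2)] by simp
qed

definition canon :: "enat \<Rightarrow> (nat \<Rightarrow> nat) \<Rightarrow> nat \<Rightarrow> (nat \<Rightarrow> nat) \<Rightarrow> edges" where
  "canon \<tau> X m \<delta> = (if enat (Suc m) < \<tau> then (SOME L. levelok X m \<delta> L) else {})"

definition Dv :: "(nat \<Rightarrow> nat) \<Rightarrow> nat \<Rightarrow> (nat \<Rightarrow> nat) \<Rightarrow> edges \<Rightarrow> nat \<Rightarrow> nat" where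
  "Dv X m p b = (\<lambda>i. Kvec X m (lvl X m b) (inv p i))"

definition goodq :: "enat \<Rightarrow> (nat \<Rightarrow> nat) \<Rightarrow> nat \<Rightarrow> (nat \<Rightarrow> nat) \<Rightarrow> edges \<Rightarrow> (nat \<Rightarrow> nat) \<Rightarrow> bool" where
  "goodq \<tau> X m p b q \<longleftrightarrow> q permutes {1..X (Suc m)} \<and> mapE p q (lvl X m b) = canon \<tau> X m (Dv X m p b)"

primrec rr :: "enat \<Rightarrow> (nat \<Rightarrow> nat) \<Rightarrow> nat \<Rightarrow> (nat \<Rightarrow> nat) \<Rightarrow> nat \<Rightarrow> edges \<Rightarrow> (nat \<Rightarrow> nat)" where
  "rr \<tau> X n \<sigma> 0 b = \<sigma>"
| "rr \<tau> X n \<sigma> (Suc k) b = (if \<exists>q. goodq \<tau> X (n + k) (rr \<tau> X n \<sigma> k b) b q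
      then SOME q. goodq \<tau> X (n + k) (rr \<tau> X n \<sigma> k b) b q else id)"

lemma rr_perm:
  assumes "\<sigma> permutes {1..X n}"
  shows "rr \<tau> X n \<sigma> k b permutes {1..X (n + k)}"
proof (induction k)
  case 0 show ?case using assms by (simp only: rr.simps add_0_right)
next
  case (Suc k)
  show ?case
  proof (cases "\<exists>q. goodq \<tau> X (n + k) (rr \<tau> X n \<sigma> k b) b q")
    case True
    define q0 where "q0 = (SOME q. goodq \<tau> X (n + k) (rr \<tau> X n \<sigma> k b) b q)"
    have g: "goodq \<tau> X (n + k) (rr \<tau> X n \<sigma> k b) b q0"
      unfolding q0_def using True by (rule someI_ex)
    have e: "rr \<tau> X n \<sigma> (Suc k) b = q0" using True unfolding q0_def by (simp only: rr.simps if_True)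
    from g have "q0 permutes {1..X (Suc (n + k))}" unfolding goodq_def by blast
    then show ?thesis unfolding e by (simp only: add_Suc_right)
  next
    case False
    then have "rr \<tau> X n \<sigma> (Suc k) b = id" by (simp only: rr.simps if_False)
    moreover have "id permutes {1..X (n + Suc k)}" by (rule permutes_id)
    ultimately show ?thesis by (simp only:)
  qed
qed

lemma rr_dep:
  assumes "\<And>j. j < k \<Longrightarrow> lvl X (n + j) b = lvl X (n + j) b'"
  shows "rr \<tau> X n \<sigma> k b = rr \<tau> X n \<sigma> k b'"
  using assms
proof (induction k)
  case 0 then show ?case by simp
next
  case (Suc k)
  have ih: "rr \<tau> X n \<sigma> k b = rr \<tau> X n \<sigma> k b'" using Suc by simp
  have l: "lvl X (n + k) b = lvl X (n + k) b'" using Suc.prems by simp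
  have g: "goodq \<tau> X (n + k) p b = goodq \<tau> X (n + k) p b'" for p
    unfolding goodq_def Dv_def l by simp
  show ?case by (simp only: rr.simps ih g)
qed

lemma lvl_edges_before:
  assumes "m < N"
  shows "lvl X m (edges_before X N b) = lvl X m b"
  unfolding lvl_def edges_before_def using assms by auto

lemma rr_edges_before:
  "rr \<tau> X n \<sigma> k (edges_before X (n + k) b) = rr \<tau> X n \<sigma> k b"
  by (rule rr_dep) (simp add: lvl_edges_before)


lemma mapE_id_comp: "mapE id q (mapE p id L) = mapE p q L"
  unfolding mapE_def image_image by (intro image_cong refl) (auto split: prod.splits)

lemma mapE_mem:
  assumes "bij p"
  shows "((a, i), (c, j)) \<in> mapE p id L \<longleftrightarrow> ((a, inv p i), (c, j)) \<in> L"
proof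
  assume "((a, i), (c, j)) \<in> mapE p id L"
  then obtain x where x: "x \<in> L" "((a, i), (c, j)) = (\<lambda>((a, i), (c, j)). ((a, p i), (c, id j))) x"
    unfolding mapE_def by blast
  obtain a' i' c' j' where xx: "x = ((a', i'), (c', j'))" by (metis prod.collapse)
  have "a' = a" "p i' = i" "c' = c" "j' = j" using x(2) xx by simp_all
  moreover have "inv p (p i') = i'" using assms by (simp add: bij_is_inj)
  ultimately show "((a, inv p i), (c, j)) \<in> L" using x(1) xx by simp
next
  assume h: "((a, inv p i), (c, j)) \<in> L"
  have "p (inv p i) = i" using assms by (simp add: bij_is_surj surj_f_inv_f)
  then have "((a, i), (c, j)) = (\<lambda>((a, i), (c, j)). ((a, p i), (c, id j))) ((a, inv p i), (c, j))" by simp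
  with h show "((a, i), (c, j)) \<in> mapE p id L" unfolding mapE_def by blast
qed

lemma levelok_mapE:
  assumes gb: "genealogy \<tau> X kk b" and m: "enat (Suc m) < \<tau>" and p: "p permutes {1..X m}"
  shows "levelok X m (Dv X m p b) (mapE p id (lvl X m b))"
proof -
  have bp: "bij p" using p by (rule permutes_bij)
  have ip: "inv p permutes {1..X m}" using p by (rule permutes_inv)
  let ?L = "mapE p id (lvl X m b)"
  have sub: "?L \<subseteq> gen X m \<times> gen X (Suc m)"
  proof
    fix e assume e: "e \<in> ?L"
    obtain a i c j where ee: "e = ((a, i), (c, j))" by (metis prod.collapse)
    have "((a, inv p i), (c, j)) \<in> lvl X m b" using e ee mapE_mem[OF bp] by simp
    then have "a = m" "inv p i \<in> {1..X m}" "c = Suc m" "j \<in> {1..X (Suc m)}" unfolding lvl_def by auto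
    moreover have "p (inv p i) = i" using bp by (simp add: bij_is_surj surj_f_inv_f)
    moreover have "p (inv p i) \<in> {1..X m}" using permutes_in_image[OF p] \<open>inv p i \<in> {1..X m}\<close> by simp
    ultimately show "e \<in> gen X m \<times> gen X (Suc m)" using ee by simp
  qed
  have deg: "outdeg ?L (m, i) = Dv X m p b i" if i: "i \<in> {1..X m}" for i
  proof -
    have "{w. ((m, i), w) \<in> ?L} = {w. ((m, inv p i), w) \<in> lvl X m b}"
    proof (intro set_eqI)
      fix w :: vertex obtain c j where "w = (c, j)" by force
      then show "w \<in> {w. ((m, i), w) \<in> ?L} \<longleftrightarrow> w \<in> {w. ((m, inv p i), w) \<in> lvl X m b}"
        using mapE_mem[OF bp] by simp
    qed
    moreover have "inv p i \<in> {1..X m}" using permutes_in_image[OF ip] i by simp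
    ultimately show ?thesis unfolding outdeg_def Dv_def Kvec_def by simp
  qed
  have uniq: "\<exists>!u. (u, w) \<in> ?L" if w: "w \<in> gen X (Suc m)" for w
  proof -
    obtain j where wj: "w = (Suc m, j)" "j \<in> {1..X (Suc m)}" using w unfolding gen_def by auto
    have "\<exists>!u. (u, w) \<in> b" using gb m w unfolding genealogy_def by blast
    then obtain u where u: "(u, w) \<in> b" and uu: "\<And>u'. (u', w) \<in> b \<Longrightarrow> u' = u" by blast
    obtain m' x j' where m': "(u, w) = ((m', x), (Suc m', j'))" "x \<in> {1..X m'}"
      using genealogy_edge[OF gb u] by blast
    have "m' = m" using m' wj by simp
    then have ux: "u = (m, x)" "x \<in> {1..X m}" using m' by simp_all
    have "((m, x), (Suc m, j)) \<in> lvl X m b" using u ux wj unfolding lvl_def by auto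
    then have "((m, p x), (Suc m, j)) \<in> ?L" using mapE_mem[OF bp] bp by (simp add: bij_is_inj)
    moreover have "u' = (m, p x)" if "(u', w) \<in> ?L" for u'
    proof -
      obtain a i where ai: "u' = (a, i)" by force
      have "((a, inv p i), (Suc m, j)) \<in> lvl X m b" using that ai wj mapE_mem[OF bp] by simp
      then have "(a, inv p i) = u" using uu wj unfolding lvl_def by auto
      then have "a = m" "inv p i = x" using ux by simp_all
      moreover have "p (inv p i) = i" using bp by (simp add: bij_is_surj surj_f_inv_f)
      ultimately show ?thesis using ai by auto
    qed
    ultimately show ?thesis using wj by blast
  qed
  show ?thesis unfolding levelok_def using sub deg uniq by blast
qed

lemma goodq_ex:
  assumes gb: "genealogy \<tau> X kk b" and p: "p permutes {1..X m}"
  shows "\<exists>q. goodq \<tau> X m p b q"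
proof (cases "enat (Suc m) < \<tau>")
  case True
  let ?L1 = "mapE p id (lvl X m b)"
  have l1: "levelok X m (Dv X m p b) ?L1" by (rule levelok_mapE[OF gb True p])
  then have l2: "levelok X m (Dv X m p b) (SOME L. levelok X m (Dv X m p b) L)" by (rule someI)
  obtain q where q: "q permutes {1..X (Suc m)}" "mapE id q ?L1 = (SOME L. levelok X m (Dv X m p b) L)"
    using glue[OF l1 l2] by blast
  have "mapE p q (lvl X m b) = canon \<tau> X m (Dv X m p b)"
    using q(2) True unfolding canon_def mapE_id_comp by simp
  then show ?thesis using q(1) unfolding goodq_def by blast
next
  case False
  have "lvl X m b = {}" by (rule genealogy_lvl_empty[OF gb False])
  then have "goodq \<tau> X m p b id" using False unfolding goodq_def canon_def mapE_def
    by (simp add: permutes_id)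
  then show ?thesis by blast
qed

lemma rr_good:
  assumes gb: "genealogy \<tau> X kk b" and \<sigma>: "\<sigma> permutes {1..X n}"
  shows "goodq \<tau> X (n + k) (rr \<tau> X n \<sigma> k b) b (rr \<tau> X n \<sigma> (Suc k) b)"
proof -
  have ex: "\<exists>q. goodq \<tau> X (n + k) (rr \<tau> X n \<sigma> k b) b q"
    by (rule goodq_ex[OF gb rr_perm[of \<sigma> X n, OF \<sigma>]])
  then have e: "rr \<tau> X n \<sigma> (Suc k) b = (SOME q. goodq \<tau> X (n + k) (rr \<tau> X n \<sigma> k b) b q)"
    by (simp only: rr.simps if_True)
  have "goodq \<tau> X (n + k) (rr \<tau> X n \<sigma> k b) b (SOME q. goodq \<tau> X (n + k) (rr \<tau> X n \<sigma> k b) b q)"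
    using ex by (rule someI_ex)
  then show ?thesis unfolding e .
qed


definition DD :: "enat \<Rightarrow> (nat \<Rightarrow> nat) \<Rightarrow> nat \<Rightarrow> (nat \<Rightarrow> nat) \<Rightarrow> nat \<Rightarrow> edges \<Rightarrow> nat \<Rightarrow> nat" where
  "DD \<tau> X n \<sigma> k b = Dv X (n + k) (rr \<tau> X n \<sigma> k b) b"

definition CC :: "enat \<Rightarrow> (nat \<Rightarrow> nat) \<Rightarrow> nat \<Rightarrow> (nat \<Rightarrow> nat) \<Rightarrow> edges \<Rightarrow> edges" where
  "CC \<tau> X n \<sigma> b = (\<Union>k. mapE (rr \<tau> X n \<sigma> k b) (rr \<tau> X n \<sigma> (Suc k) b) (lvl X (n + k) b))"

lemma mapE_lvl_fst:
  assumes "e \<in> mapE p q (lvl X m b)"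
  shows "fst (fst e) = m"
proof -
  obtain x where x: "x \<in> lvl X m b" "e = (\<lambda>((a, i), (c, j)). ((a, p i), (c, q j))) x"
    using assms unfolding mapE_def by blast
  obtain a i c j where xx: "x = ((a, i), (c, j))" by (metis prod.collapse)
  have "a = m" using x(1) xx unfolding lvl_def by auto
  then show ?thesis using x(2) xx by simp
qed

lemma CC_subset_iff:
  assumes gb: "genealogy \<tau> X kk b" and \<sigma>: "\<sigma> permutes {1..X n}"
    and F: "\<forall>e\<in>F. fst (fst e) < n + K"
  shows "F \<subseteq> CC \<tau> X n \<sigma> b \<longleftrightarrow> F \<subseteq> (\<Union>k\<in>{..<K}. canon \<tau> X (n + k) (DD \<tau> X n \<sigma> k b))"
proof -
  have comp: "mapE (rr \<tau> X n \<sigma> k b) (rr \<tau> X n \<sigma> (Suc k) b) (lvl X (n + k) b)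
      = canon \<tau> X (n + k) (DD \<tau> X n \<sigma> k b)" for k
    using rr_good[OF gb \<sigma>, of k] unfolding goodq_def DD_def by simp
  show ?thesis
  proof
    assume h: "F \<subseteq> CC \<tau> X n \<sigma> b"
    show "F \<subseteq> (\<Union>k\<in>{..<K}. canon \<tau> X (n + k) (DD \<tau> X n \<sigma> k b))"
    proof
      fix e assume e: "e \<in> F"
      then obtain k where k: "e \<in> mapE (rr \<tau> X n \<sigma> k b) (rr \<tau> X n \<sigma> (Suc k) b) (lvl X (n + k) b)"
        using h unfolding CC_def by blast
      then have "fst (fst e) = n + k" by (rule mapE_lvl_fst)
      then have "k < K" using F e by auto
      then show "e \<in> (\<Union>k\<in>{..<K}. canon \<tau> X (n + k) (DD \<tau> X n \<sigma> k b))" using k comp by auto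
    qed
  next
    assume "F \<subseteq> (\<Union>k\<in>{..<K}. canon \<tau> X (n + k) (DD \<tau> X n \<sigma> k b))"
    then show "F \<subseteq> CC \<tau> X n \<sigma> b" unfolding CC_def comp[symmetric] by blast
  qed
qed

definition RR :: "enat \<Rightarrow> (nat \<Rightarrow> nat) \<Rightarrow> nat \<Rightarrow> (nat \<Rightarrow> nat) \<Rightarrow> edges \<Rightarrow> vertex \<Rightarrow> vertex" where
  "RR \<tau> X n \<sigma> b = (\<lambda>(a, i). if n \<le> a then (a, rr \<tau> X n \<sigma> (a - n) b i) else (a, i))"

lemma bij_RR:
  assumes \<sigma>: "\<sigma> permutes {1..X n}"
  shows "bij (RR \<tau> X n \<sigma> b)"
proof -
  define RI where "RI = (\<lambda>(a, i). if n \<le> a then (a, inv (rr \<tau> X n \<sigma> (a - n) b) i) else (a, i))"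
  have p: "rr \<tau> X n \<sigma> k b permutes {1..X (n + k)}" for k by (rule rr_perm[of \<sigma> X n, OF \<sigma>])
  have "RR \<tau> X n \<sigma> b \<circ> RI = id"
  proof
    fix v :: vertex obtain a i where v: "v = (a, i)" by force
    show "(RR \<tau> X n \<sigma> b \<circ> RI) v = id v"
      using permutes_inverses(1)[OF p[of "a - n"]] unfolding v RR_def RI_def by simp
  qed
  moreover have "RI \<circ> RR \<tau> X n \<sigma> b = id"
  proof
    fix v :: vertex obtain a i where v: "v = (a, i)" by force
    show "(RI \<circ> RR \<tau> X n \<sigma> b) v = id v"
      using permutes_inverses(2)[OF p[of "a - n"]] unfolding v RR_def RI_def by simp
  qed
  ultimately show ?thesis by (metis o_bij)
qed

lemma CC_mapV:
  assumes gb: "genealogy \<tau> X kk b" and \<sigma>: "\<sigma> permutes {1..X n}"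
  shows "CC \<tau> X n \<sigma> b = mapV (RR \<tau> X n \<sigma> b) (b \<inter> {e. n \<le> fst (fst e)})"
proof (intro subset_antisym subsetI)
  fix e assume "e \<in> CC \<tau> X n \<sigma> b"
  then obtain k where "e \<in> mapE (rr \<tau> X n \<sigma> k b) (rr \<tau> X n \<sigma> (Suc k) b) (lvl X (n + k) b)"
    unfolding CC_def by blast
  then obtain x where x: "x \<in> lvl X (n + k) b"
    "e = (\<lambda>((a, i), (c, j)). ((a, rr \<tau> X n \<sigma> k b i), (c, rr \<tau> X n \<sigma> (Suc k) b j))) x"
    unfolding mapE_def by blast
  obtain a i c j where xx: "x = ((a, i), (c, j))" by (metis prod.collapse)
  have ac: "a = n + k" "c = Suc (n + k)" using x(1) xx unfolding lvl_def by auto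
  have "x \<in> b \<inter> {e. n \<le> fst (fst e)}" using x(1) xx ac unfolding lvl_def by auto
  moreover have "e = (\<lambda>(u, w). (RR \<tau> X n \<sigma> b u, RR \<tau> X n \<sigma> b w)) x"
    using x(2) xx ac unfolding RR_def by simp
  ultimately show "e \<in> mapV (RR \<tau> X n \<sigma> b) (b \<inter> {e. n \<le> fst (fst e)})"
    unfolding mapV_def by blast
next
  fix e assume "e \<in> mapV (RR \<tau> X n \<sigma> b) (b \<inter> {e. n \<le> fst (fst e)})"
  then obtain x where x: "x \<in> b" "n \<le> fst (fst x)"
    "e = (\<lambda>(u, w). (RR \<tau> X n \<sigma> b u, RR \<tau> X n \<sigma> b w)) x"
    unfolding mapV_def by blast
  obtain m i j where m: "x = ((m, i), (Suc m, j))" "i \<in> {1..X m}" "j \<in> {1..X (Suc m)}"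
    using genealogy_edge[OF gb x(1)] by blast
  define k where "k = m - n"
  have mk: "m = n + k" "Suc m - n = Suc k" using x(2) m(1) unfolding k_def by auto
  have "x \<in> lvl X (n + k) b" using x(1) m mk unfolding lvl_def by auto
  moreover have "e = (\<lambda>((a, i), (c, j)). ((a, rr \<tau> X n \<sigma> k b i), (c, rr \<tau> X n \<sigma> (Suc k) b j))) x"
    using x(3) m(1) mk unfolding RR_def by simp
  ultimately have "e \<in> mapE (rr \<tau> X n \<sigma> k b) (rr \<tau> X n \<sigma> (Suc k) b) (lvl X (n + k) b)"
    unfolding mapE_def by blast
  then show "e \<in> CC \<tau> X n \<sigma> b" unfolding CC_def by blast
qed

lemma rtrancl_restrict:
  assumes gb: "genealogy \<tau> X kk b" and v: "n \<le> fst v" and vw: "(v, w) \<in> b\<^sup>*"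
  shows "(v, w) \<in> (b \<inter> {e. n \<le> fst (fst e)})\<^sup>*"
  using vw
proof (induction rule: rtrancl_induct)
  case base then show ?case by simp
next
  case (step y z)
  have "fst v \<le> fst y" using genealogy_rtrancl_fst[OF gb step(1)] .
  then have "(y, z) \<in> b \<inter> {e. n \<le> fst (fst e)}" using step(2) v by simp
  with step(3) show ?case by (rule rtrancl_into_rtrancl)
qed

lemma subtree_restrict:
  assumes gb: "genealogy \<tau> X kk b" and v: "n \<le> fst v"
  shows "subtree b v = subtree (b \<inter> {e. n \<le> fst (fst e)}) v"
proof -
  let ?b = "b \<inter> {e. n \<le> fst (fst e)}"
  have d: "desc b v = desc ?b v"
    unfolding desc_def using rtrancl_restrict[OF gb v] rtrancl_mono[of ?b b] by blast
  have ge: "n \<le> fst w" if "w \<in> desc b v" for w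
  proof -
    have "(v, w) \<in> b\<^sup>*" using that unfolding desc_def by simp
    then have "fst v \<le> fst w" by (rule genealogy_rtrancl_fst[OF gb])
    then show ?thesis using v by simp
  qed
  have "b \<inter> desc b v \<times> desc b v = ?b \<inter> desc b v \<times> desc b v"
  proof (intro set_eqI iffI)
    fix e assume "e \<in> b \<inter> desc b v \<times> desc b v"
    then show "e \<in> ?b \<inter> desc b v \<times> desc b v" using ge[of "fst e"] by (cases e) simp
  qed simp
  then show ?thesis unfolding subtree_def d by simp
qed

lemma tree_vec_CC:
  assumes gb: "genealogy \<tau> X kk b" and \<sigma>: "\<sigma> permutes {1..X n}" and i: "i \<in> {1..X n}"
  shows "tree_vec X n (CC \<tau> X n \<sigma> b) (n, \<sigma> i) = tree_vec X n b (n, i)"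
proof -
  let ?b = "b \<inter> {e. n \<le> fst (fst e)}"
  let ?R = "RR \<tau> X n \<sigma> b"
  have R: "?R (n, i) = (n, \<sigma> i)" unfolding RR_def by simp
  have si: "\<sigma> i \<in> {1..X n}" using permutes_in_image[OF \<sigma>] i by simp
  have "digraph_iso (subtree ?b (n, i)) (subtree (mapV ?R ?b) (?R (n, i)))"
    by (rule subtree_mapV_iso[OF bij_RR[of \<sigma> X n, OF \<sigma>]])
  then have "iso_class (subtree (CC \<tau> X n \<sigma> b) (n, \<sigma> i)) = iso_class (subtree b (n, i))"
    unfolding CC_mapV[OF gb \<sigma>, symmetric] R subtree_restrict[OF gb, of n "(n, i)", simplified, symmetric]
    by (simp add: iso_class_eq digraph_iso_sym)
  then show ?thesis unfolding tree_vec_def using i si by simp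
qed


lemma (in prob_space) part_sum:
  assumes V: "finite V" and f: "\<And>\<omega>. \<omega> \<in> space M \<Longrightarrow> f \<omega> \<in> V"
    and ms: "\<And>v. v \<in> V \<Longrightarrow> {\<omega> \<in> space M. P \<omega> \<and> f \<omega> = v} \<in> sets M"
  shows "measure M {\<omega> \<in> space M. P \<omega>} = (\<Sum>v\<in>V. measure M {\<omega> \<in> space M. P \<omega> \<and> f \<omega> = v})"
proof -
  have "{\<omega> \<in> space M. P \<omega>} = (\<Union>v\<in>V. {\<omega> \<in> space M. P \<omega> \<and> f \<omega> = v})" using f by auto
  moreover have "disjoint_family_on (\<lambda>v. {\<omega> \<in> space M. P \<omega> \<and> f \<omega> = v}) V"
    unfolding disjoint_family_on_def by auto
  moreover have "(\<lambda>v. {\<omega> \<in> space M. P \<omega> \<and> f \<omega> = v}) ` V \<subseteq> events" using ms by auto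
  ultimately show ?thesis using finite_measure_finite_Union[OF V] by simp
qed

definition KV :: "(nat \<Rightarrow> nat) \<Rightarrow> nat \<Rightarrow> (nat \<Rightarrow> nat) set" where
  "KV X m = {\<kappa>. (\<forall>i. i \<notin> {1..X m} \<longrightarrow> \<kappa> i = 0) \<and> (\<forall>i. \<kappa> i \<le> X (Suc m))}"

lemma finite_KV: "finite (KV X m)"
proof -
  have "KV X m \<subseteq> (\<lambda>g i. if i \<in> {1..X m} then g i else 0) ` ({1..X m} \<rightarrow>\<^sub>E {0..X (Suc m)})"
  proof
    fix \<kappa> assume k: "\<kappa> \<in> KV X m"
    let ?g = "restrict \<kappa> {1..X m}"
    have "?g \<in> {1..X m} \<rightarrow>\<^sub>E {0..X (Suc m)}" using k unfolding KV_def by auto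
    moreover have "\<kappa> = (\<lambda>i. if i \<in> {1..X m} then ?g i else 0)" using k unfolding KV_def by auto
    ultimately show "\<kappa> \<in> (\<lambda>g i. if i \<in> {1..X m} then g i else 0) ` ({1..X m} \<rightarrow>\<^sub>E {0..X (Suc m)})"
      by blast
  qed
  moreover have "finite ({1..X m} \<rightarrow>\<^sub>E {0..X (Suc m)})" by (intro finite_PiE) auto
  ultimately show ?thesis by (rule finite_subset[OF _ finite_imageI])
qed

lemma card_gen: "card (gen X m) = X m"
proof -
  have "gen X m = (\<lambda>i. (m, i)) ` {1..X m}" unfolding gen_def by auto
  then show ?thesis by (simp add: card_image inj_on_def)
qed

lemma Kvec_lvl_KV: "Kvec X m (lvl X m b) \<in> KV X m"
proof -
  have "outdeg (lvl X m b) (m, i) \<le> X (Suc m)" for i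
  proof -
    have "{w. ((m, i), w) \<in> lvl X m b} \<subseteq> gen X (Suc m)" unfolding lvl_def by auto
    then have "card {w. ((m, i), w) \<in> lvl X m b} \<le> card (gen X (Suc m))" by (intro card_mono) auto
    then show ?thesis unfolding outdeg_def card_gen .
  qed
  then show ?thesis unfolding KV_def Kvec_def by auto
qed

lemma KV_perm:
  assumes "p permutes {1..X m}" "\<kappa> \<in> KV X m"
  shows "\<kappa> \<circ> p \<in> KV X m"
proof -
  have "i \<notin> {1..X m} \<Longrightarrow> p i = i" for i using assms(1) unfolding permutes_def by blast
  then show ?thesis using assms(2) unfolding KV_def by auto
qed

lemma KV_perm_bij:
  assumes p: "p permutes {1..X m}"
  shows "bij_betw (\<lambda>\<kappa>. \<kappa> \<circ> inv p) (KV X m) (KV X m)"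
proof -
  have ip: "inv p permutes {1..X m}" using p by (rule permutes_inv)
  show ?thesis
  proof (rule bij_betw_byWitness[where f'="\<lambda>\<kappa>. \<kappa> \<circ> p"])
    show "\<forall>a\<in>KV X m. a \<circ> inv p \<circ> p = a" using permutes_inv_o(2)[OF p] by (simp add: o_assoc[symmetric])
    show "\<forall>a'\<in>KV X m. a' \<circ> p \<circ> inv p = a'" using permutes_inv_o(1)[OF p] by (simp add: o_assoc[symmetric])
    show "(\<lambda>\<kappa>. \<kappa> \<circ> inv p) ` KV X m \<subseteq> KV X m" using KV_perm[of _ X m, OF ip] by auto
    show "(\<lambda>\<kappa>. \<kappa> \<circ> p) ` KV X m \<subseteq> KV X m" using KV_perm[of _ X m, OF p] by auto
  qed
qed

lemma Dv_KV:
  assumes "p permutes {1..X m}"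
  shows "Dv X m p b \<in> KV X m"
proof -
  have "Dv X m p b = Kvec X m (lvl X m b) \<circ> inv p" unfolding Dv_def by auto
  then show ?thesis using KV_perm[of _ X m, OF permutes_inv[OF assms] Kvec_lvl_KV[of X m b]] by simp
qed


definition Dt :: "enat \<Rightarrow> (nat \<Rightarrow> nat) \<Rightarrow> nat \<Rightarrow> (nat \<Rightarrow> nat) \<Rightarrow> nat \<Rightarrow> edges \<Rightarrow> nat \<Rightarrow> nat \<Rightarrow> nat" where
  "Dt \<tau> X n \<sigma> K b = (\<lambda>k. if k < K then DD \<tau> X n \<sigma> k b else (\<lambda>_. 0))"

lemma edges_before_mono:
  assumes "N \<le> N'"
  shows "edges_before X N (edges_before X N' b) = edges_before X N b"
  unfolding edges_before_def using assms by auto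

lemma Dt_eb:
  assumes "n + K \<le> N"
  shows "Dt \<tau> X n \<sigma> K (edges_before X N b) = Dt \<tau> X n \<sigma> K b"
proof -
  have "DD \<tau> X n \<sigma> k (edges_before X N b) = DD \<tau> X n \<sigma> k b" if k: "k < K" for k
  proof -
    have "rr \<tau> X n \<sigma> k (edges_before X N b) = rr \<tau> X n \<sigma> k b"
      by (rule rr_dep) (use k assms in \<open>simp add: lvl_edges_before\<close>)
    moreover have "lvl X (n + k) (edges_before X N b) = lvl X (n + k) b"
      using k assms by (simp add: lvl_edges_before)
    ultimately show ?thesis unfolding DD_def Dv_def by simp
  qed
  then show ?thesis unfolding Dt_def by auto
qed

lemma Dt_Suc: "Dt \<tau> X n \<sigma> (Suc k) b = (Dt \<tau> X n \<sigma> k b)(k := DD \<tau> X n \<sigma> k b)"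
  unfolding Dt_def by auto

lemma finite_eb_set: "finite (\<Union>m<N. gen X m \<times> gen X (Suc m))" by auto

locale gsetup =
  fixes M :: "'w measure" and \<tau> :: enat and X :: "nat \<Rightarrow> nat" and kk :: "nat \<Rightarrow> nat \<Rightarrow> nat"
    and E :: "'w \<Rightarrow> edges"
  assumes ps: "prob_space M" and meas: "E \<in> M \<rightarrow>\<^sub>M edge_space"
    and gb: "\<And>\<omega>. \<omega> \<in> space M \<Longrightarrow> genealogy \<tau> X kk (E \<omega>)"
    and fn: "forward_neutral M \<tau> X E"
begin

sublocale prob_space M by (rule ps)

lemma meas_eb:
  assumes "\<And>\<omega>. \<omega> \<in> space M \<Longrightarrow> P \<omega> = G (edges_before X N (E \<omega>))"
  shows "{\<omega> \<in> space M. P \<omega>} \<in> sets M"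
proof -
  have "{\<omega> \<in> space M. P \<omega>} = E -` {b. G (b \<inter> (\<Union>m<N. gen X m \<times> gen X (Suc m)))} \<inter> space M"
    using assms unfolding edges_before_def by auto
  also have "\<dots> \<in> sets M"
    by (rule measurable_sets[OF meas fin_dep_sets[OF finite_eb_set]])
  finally show ?thesis .
qed

lemma K_eb:
  assumes "\<omega> \<in> space M"
  shows "Kvec X m (E \<omega>) = Kvec X m (lvl X m (edges_before X (Suc m) (E \<omega>)))"
  using genealogy_Kvec_lvl[OF gb[OF assms]] by (simp add: lvl_edges_before)

lemma K_KV:
  assumes "\<omega> \<in> space M"
  shows "Kvec X m (E \<omega>) \<in> KV X m"
  using genealogy_Kvec_lvl[OF gb[OF assms]] Kvec_lvl_KV[of X m "E \<omega>"] by simp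

lemma DD_K:
  assumes "\<omega> \<in> space M"
  shows "DD \<tau> X n \<sigma> k (E \<omega>) = Kvec X (n + k) (E \<omega>) \<circ> inv (rr \<tau> X n \<sigma> k (E \<omega>))"
  unfolding DD_def Dv_def using genealogy_Kvec_lvl[OF gb[OF assms]] by auto

lemma exch:
  assumes N: "enat N < \<tau>" and p: "p permutes {1..X N}"
  shows "measure M {\<omega> \<in> space M. Kvec X N (E \<omega>) = \<kappa> \<circ> p} = measure M {\<omega> \<in> space M. Kvec X N (E \<omega>) = \<kappa>}"
proof -
  have ip: "inv p permutes {1..X N}" using p by (rule permutes_inv)
  have "measure M {\<omega> \<in> space M. Kvec X N (E \<omega>) = \<kappa>}
      = measure M {\<omega> \<in> space M. (\<lambda>i. Kvec X N (E \<omega>) (inv p i)) = \<kappa>}"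
    using fn N ip unfolding forward_neutral_def by blast
  also have "{\<omega> \<in> space M. (\<lambda>i. Kvec X N (E \<omega>) (inv p i)) = \<kappa>} = {\<omega> \<in> space M. Kvec X N (E \<omega>) = \<kappa> \<circ> p}"
  proof -
    have "(\<lambda>i. K (inv p i)) = \<kappa> \<longleftrightarrow> K = \<kappa> \<circ> p" for K :: "nat \<Rightarrow> nat"
    proof
      assume "(\<lambda>i. K (inv p i)) = \<kappa>"
      then have "\<kappa> \<circ> p = K \<circ> inv p \<circ> p" by (auto simp: o_def)
      then show "K = \<kappa> \<circ> p" using permutes_inv_o(2)[OF p] by (simp add: o_assoc[symmetric])
    next
      assume "K = \<kappa> \<circ> p"
      then show "(\<lambda>i. K (inv p i)) = \<kappa>" using permutes_inverses(1)[OF p] by auto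
    qed
    then show ?thesis by blast
  qed
  finally show ?thesis by simp
qed

lemma indep:
  assumes N: "enat N < \<tau>"
  shows "measure M {\<omega> \<in> space M. Kvec X N (E \<omega>) = \<kappa> \<and> edges_before X N (E \<omega>) = S}
    = measure M {\<omega> \<in> space M. Kvec X N (E \<omega>) = \<kappa>} * measure M {\<omega> \<in> space M. edges_before X N (E \<omega>) = S}"
  using fn N unfolding forward_neutral_def by blast

end


context gsetup
begin

lemma decomp:
  assumes \<sigma>: "\<sigma> permutes {1..X n}"
  shows "measure M {\<omega> \<in> space M. Q (Dt \<tau> X n \<sigma> (Suc k) (E \<omega>))} =
    (\<Sum>\<kappa>\<in>KV X (n + k). measure M {\<omega> \<in> space M. Kvec X (n + k) (E \<omega>) = \<kappa>} *
        measure M {\<omega> \<in> space M. Q ((Dt \<tau> X n \<sigma> k (E \<omega>))(k := \<kappa>))})"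
proof -
  define N where "N = n + k"
  define eb where "eb \<omega> = edges_before X N (E \<omega>)" for \<omega>
  define K where "K \<omega> = Kvec X N (E \<omega>)" for \<omega>
  define \<rho> where "\<rho> S = rr \<tau> X n \<sigma> k S" for S
  have \<rho>p: "\<rho> S permutes {1..X N}" for S unfolding \<rho>_def N_def by (rule rr_perm[of \<sigma> X n, OF \<sigma>])
  have f2: "Dt \<tau> X n \<sigma> k (E \<omega>) = Dt \<tau> X n \<sigma> k (eb \<omega>)" for \<omega>
    unfolding eb_def N_def by (simp add: Dt_eb)
  have f1: "Dt \<tau> X n \<sigma> (Suc k) (E \<omega>) = (Dt \<tau> X n \<sigma> k (eb \<omega>))(k := K \<omega> \<circ> inv (\<rho> (eb \<omega>)))"
    if \<omega>: "\<omega> \<in> space M" for \<omega>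
    unfolding Dt_Suc DD_K[OF \<omega>] f2 unfolding K_def \<rho>_def eb_def N_def rr_edges_before ..
  have mG: "{\<omega> \<in> space M. G (eb \<omega>) (K \<omega>)} \<in> sets M" for G
  proof (rule meas_eb[where N="Suc N"])
    fix \<omega> assume \<omega>: "\<omega> \<in> space M"
    show "G (eb \<omega>) (K \<omega>) = (\<lambda>c. G (edges_before X N c) (Kvec X N (lvl X N c))) (edges_before X (Suc N) (E \<omega>))"
      unfolding eb_def K_def K_eb[OF \<omega>] by (simp add: edges_before_mono)
  qed
  have mG1: "{\<omega> \<in> space M. Q (Dt \<tau> X n \<sigma> (Suc k) (E \<omega>)) \<and> eb \<omega> = S \<and> K \<omega> = \<kappa>} \<in> sets M" for S \<kappa>
  proof -
    have "{\<omega> \<in> space M. Q (Dt \<tau> X n \<sigma> (Suc k) (E \<omega>)) \<and> eb \<omega> = S \<and> K \<omega> = \<kappa>}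
      = {\<omega> \<in> space M. (\<lambda>e c. Q ((Dt \<tau> X n \<sigma> k e)(k := c \<circ> inv (\<rho> e))) \<and> e = S \<and> c = \<kappa>) (eb \<omega>) (K \<omega>)}"
      using f1 by auto
    then show ?thesis using mG by simp
  qed
  have mG2: "{\<omega> \<in> space M. Q (Dt \<tau> X n \<sigma> (Suc k) (E \<omega>)) \<and> eb \<omega> = S} \<in> sets M" for S
  proof -
    have "{\<omega> \<in> space M. Q (Dt \<tau> X n \<sigma> (Suc k) (E \<omega>)) \<and> eb \<omega> = S}
      = {\<omega> \<in> space M. (\<lambda>e c. Q ((Dt \<tau> X n \<sigma> k e)(k := c \<circ> inv (\<rho> e))) \<and> e = S) (eb \<omega>) (K \<omega>)}"
      using f1 by auto
    then show ?thesis using mG by simp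
  qed
  have mG3: "{\<omega> \<in> space M. Q ((Dt \<tau> X n \<sigma> k (E \<omega>))(k := \<kappa>)) \<and> eb \<omega> = S} \<in> sets M" for S \<kappa>
  proof -
    have "{\<omega> \<in> space M. Q ((Dt \<tau> X n \<sigma> k (E \<omega>))(k := \<kappa>)) \<and> eb \<omega> = S}
      = {\<omega> \<in> space M. (\<lambda>e c. Q ((Dt \<tau> X n \<sigma> k e)(k := \<kappa>)) \<and> e = S) (eb \<omega>) (K \<omega>)}"
      using f2 by auto
    then show ?thesis using mG by simp
  qed
  show ?thesis
  proof (cases "enat N < \<tau>")
    case True
    define SS where "SS = Pow (\<Union>m<N. gen X m \<times> gen X (Suc m))"
    have finSS: "finite SS" unfolding SS_def using finite_eb_set by simp
    have ebSS: "eb \<omega> \<in> SS" for \<omega> unfolding SS_def eb_def edges_before_def by auto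
    have KKV: "\<omega> \<in> space M \<Longrightarrow> K \<omega> \<in> KV X N" for \<omega> unfolding K_def by (rule K_KV)
    have "measure M {\<omega> \<in> space M. Q (Dt \<tau> X n \<sigma> (Suc k) (E \<omega>))}
        = (\<Sum>S\<in>SS. measure M {\<omega> \<in> space M. Q (Dt \<tau> X n \<sigma> (Suc k) (E \<omega>)) \<and> eb \<omega> = S})"
      by (rule part_sum[OF finSS ebSS mG2])
    also have "\<dots> = (\<Sum>S\<in>SS. \<Sum>\<kappa>\<in>KV X N.
        measure M {\<omega> \<in> space M. (Q (Dt \<tau> X n \<sigma> (Suc k) (E \<omega>)) \<and> eb \<omega> = S) \<and> K \<omega> = \<kappa>})"
      by (intro sum.cong refl part_sum[OF finite_KV KKV]) (assumption, unfold conj_assoc, rule mG1)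
    also have "\<dots> = (\<Sum>S\<in>SS. \<Sum>\<kappa>\<in>KV X N. (if Q ((Dt \<tau> X n \<sigma> k S)(k := \<kappa> \<circ> inv (\<rho> S)))
        then measure M {\<omega> \<in> space M. K \<omega> = \<kappa>} * measure M {\<omega> \<in> space M. eb \<omega> = S} else 0))"
    proof (intro sum.cong refl)
      fix S \<kappa>
      have "{\<omega> \<in> space M. (Q (Dt \<tau> X n \<sigma> (Suc k) (E \<omega>)) \<and> eb \<omega> = S) \<and> K \<omega> = \<kappa>}
        = (if Q ((Dt \<tau> X n \<sigma> k S)(k := \<kappa> \<circ> inv (\<rho> S))) then {\<omega> \<in> space M. K \<omega> = \<kappa> \<and> eb \<omega> = S} else {})"
        using f1 by auto
      then show "measure M {\<omega> \<in> space M. (Q (Dt \<tau> X n \<sigma> (Suc k) (E \<omega>)) \<and> eb \<omega> = S) \<and> K \<omega> = \<kappa>}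
        = (if Q ((Dt \<tau> X n \<sigma> k S)(k := \<kappa> \<circ> inv (\<rho> S)))
          then measure M {\<omega> \<in> space M. K \<omega> = \<kappa>} * measure M {\<omega> \<in> space M. eb \<omega> = S} else 0)"
        using indep[OF True, of \<kappa> S] unfolding K_def eb_def by simp
    qed
    also have "\<dots> = (\<Sum>S\<in>SS. \<Sum>\<kappa>\<in>KV X N. (if Q ((Dt \<tau> X n \<sigma> k S)(k := \<kappa>))
        then measure M {\<omega> \<in> space M. K \<omega> = \<kappa>} * measure M {\<omega> \<in> space M. eb \<omega> = S} else 0))"
    proof (rule sum.cong[OF refl])
      fix S
      define G where "G \<kappa>' = (if Q ((Dt \<tau> X n \<sigma> k S)(k := \<kappa>'))
        then measure M {\<omega> \<in> space M. K \<omega> = \<kappa>'} * measure M {\<omega> \<in> space M. eb \<omega> = S} else 0)" for \<kappa>'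
      have "(\<Sum>\<kappa>\<in>KV X N. (if Q ((Dt \<tau> X n \<sigma> k S)(k := \<kappa> \<circ> inv (\<rho> S)))
        then measure M {\<omega> \<in> space M. K \<omega> = \<kappa>} * measure M {\<omega> \<in> space M. eb \<omega> = S} else 0))
        = (\<Sum>\<kappa>\<in>KV X N. G (\<kappa> \<circ> inv (\<rho> S)))"
      proof (intro sum.cong refl)
        fix \<kappa> :: "nat \<Rightarrow> nat"
        have "\<kappa> = \<kappa> \<circ> inv (\<rho> S) \<circ> \<rho> S" using permutes_inv_o(2)[OF \<rho>p[of S]] by (simp add: o_assoc[symmetric])
        then have "measure M {\<omega> \<in> space M. K \<omega> = \<kappa>} = measure M {\<omega> \<in> space M. K \<omega> = \<kappa> \<circ> inv (\<rho> S) \<circ> \<rho> S}"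
          by simp
        also have "\<dots> = measure M {\<omega> \<in> space M. K \<omega> = \<kappa> \<circ> inv (\<rho> S)}"
          unfolding K_def by (rule exch[OF True \<rho>p])
        finally show "(if Q ((Dt \<tau> X n \<sigma> k S)(k := \<kappa> \<circ> inv (\<rho> S)))
          then measure M {\<omega> \<in> space M. K \<omega> = \<kappa>} * measure M {\<omega> \<in> space M. eb \<omega> = S} else 0)
          = G (\<kappa> \<circ> inv (\<rho> S))" unfolding G_def by simp
      qed
      also have "\<dots> = (\<Sum>\<kappa>\<in>KV X N. G \<kappa>)"
        by (rule sum.reindex_bij_betw[OF KV_perm_bij[of _ X N, OF \<rho>p[of S]]])
      finally show "(\<Sum>\<kappa>\<in>KV X N. (if Q ((Dt \<tau> X n \<sigma> k S)(k := \<kappa> \<circ> inv (\<rho> S)))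
        then measure M {\<omega> \<in> space M. K \<omega> = \<kappa>} * measure M {\<omega> \<in> space M. eb \<omega> = S} else 0))
        = (\<Sum>\<kappa>\<in>KV X N. (if Q ((Dt \<tau> X n \<sigma> k S)(k := \<kappa>))
        then measure M {\<omega> \<in> space M. K \<omega> = \<kappa>} * measure M {\<omega> \<in> space M. eb \<omega> = S} else 0))"
        by (simp only: G_def)
    qed
    also have "\<dots> = (\<Sum>\<kappa>\<in>KV X N. measure M {\<omega> \<in> space M. K \<omega> = \<kappa>} *
        (\<Sum>S\<in>SS. if Q ((Dt \<tau> X n \<sigma> k S)(k := \<kappa>)) then measure M {\<omega> \<in> space M. eb \<omega> = S} else 0))"
      by (subst sum.swap) (simp add: sum_distrib_left if_distrib mult_zero_right cong: if_cong)
    also have "\<dots> = (\<Sum>\<kappa>\<in>KV X N. measure M {\<omega> \<in> space M. K \<omega> = \<kappa>} *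
        measure M {\<omega> \<in> space M. Q ((Dt \<tau> X n \<sigma> k (E \<omega>))(k := \<kappa>))})"
    proof (intro sum.cong refl arg_cong2[where f="(*)"])
      fix \<kappa>
      have "measure M {\<omega> \<in> space M. Q ((Dt \<tau> X n \<sigma> k (E \<omega>))(k := \<kappa>))}
          = (\<Sum>S\<in>SS. measure M {\<omega> \<in> space M. Q ((Dt \<tau> X n \<sigma> k (E \<omega>))(k := \<kappa>)) \<and> eb \<omega> = S})"
        by (rule part_sum[OF finSS ebSS mG3])
      also have "\<dots> = (\<Sum>S\<in>SS. if Q ((Dt \<tau> X n \<sigma> k S)(k := \<kappa>)) then measure M {\<omega> \<in> space M. eb \<omega> = S} else 0)"
      proof (intro sum.cong refl)
        fix S
        have "{\<omega> \<in> space M. Q ((Dt \<tau> X n \<sigma> k (E \<omega>))(k := \<kappa>)) \<and> eb \<omega> = S}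
          = (if Q ((Dt \<tau> X n \<sigma> k S)(k := \<kappa>)) then {\<omega> \<in> space M. eb \<omega> = S} else {})"
          using f2 by auto
        then show "measure M {\<omega> \<in> space M. Q ((Dt \<tau> X n \<sigma> k (E \<omega>))(k := \<kappa>)) \<and> eb \<omega> = S}
          = (if Q ((Dt \<tau> X n \<sigma> k S)(k := \<kappa>)) then measure M {\<omega> \<in> space M. eb \<omega> = S} else 0)" by simp
      qed
      finally show "(\<Sum>S\<in>SS. if Q ((Dt \<tau> X n \<sigma> k S)(k := \<kappa>)) then measure M {\<omega> \<in> space M. eb \<omega> = S} else 0)
        = measure M {\<omega> \<in> space M. Q ((Dt \<tau> X n \<sigma> k (E \<omega>))(k := \<kappa>))}" by simp
    qed
    finally show ?thesis unfolding K_def N_def .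
  next
    case False
    have F2: "\<not> enat (Suc N) < \<tau>" using False by (metis Suc_ile_eq less_imp_le order_le_less_trans)
    have K0: "K \<omega> = (\<lambda>_. 0)" if "\<omega> \<in> space M" for \<omega>
      unfolding K_def by (rule genealogy_Kvec_zero[OF gb[OF that] F2])
    have "measure M {\<omega> \<in> space M. Q (Dt \<tau> X n \<sigma> (Suc k) (E \<omega>))}
        = measure M {\<omega> \<in> space M. Q ((Dt \<tau> X n \<sigma> k (E \<omega>))(k := (\<lambda>_. 0)))}"
    proof -
      have "{\<omega> \<in> space M. Q (Dt \<tau> X n \<sigma> (Suc k) (E \<omega>))} = {\<omega> \<in> space M. Q ((Dt \<tau> X n \<sigma> k (E \<omega>))(k := (\<lambda>_. 0)))}"
        using f1 K0 f2 by (auto simp: o_def)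
      then show ?thesis by simp
    qed
    also have "\<dots> = (\<Sum>\<kappa>\<in>KV X N. (if \<kappa> = (\<lambda>_. 0) then 1 else 0) *
        measure M {\<omega> \<in> space M. Q ((Dt \<tau> X n \<sigma> k (E \<omega>))(k := \<kappa>))})"
    proof -
      let ?f = "\<lambda>\<kappa>. measure M {\<omega> \<in> space M. Q ((Dt \<tau> X n \<sigma> k (E \<omega>))(k := \<kappa>))}"
      have z: "(\<lambda>_. 0) \<in> KV X N" unfolding KV_def by simp
      have "(\<Sum>\<kappa>\<in>KV X N. (if \<kappa> = (\<lambda>_. 0) then 1 else 0) * ?f \<kappa>)
          = (\<Sum>\<kappa>\<in>KV X N. if \<kappa> = (\<lambda>_. 0) then ?f \<kappa> else 0)"
        by (rule sum.cong) auto
      also have "\<dots> = ?f (\<lambda>_. 0)" using z by (simp only: sum.delta[OF finite_KV] if_True)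
      finally show ?thesis by simp
    qed
    also have "\<dots> = (\<Sum>\<kappa>\<in>KV X N. measure M {\<omega> \<in> space M. K \<omega> = \<kappa>} *
        measure M {\<omega> \<in> space M. Q ((Dt \<tau> X n \<sigma> k (E \<omega>))(k := \<kappa>))})"
    proof (intro sum.cong refl arg_cong2[where f="(*)"])
      fix \<kappa> :: "nat \<Rightarrow> nat"
      have "{\<omega> \<in> space M. K \<omega> = \<kappa>} = (if \<kappa> = (\<lambda>_. 0) then space M else {})" using K0 by auto
      then show "(if \<kappa> = (\<lambda>_. 0) then 1 else 0) = measure M {\<omega> \<in> space M. K \<omega> = \<kappa>}"
        by (simp add: prob_space)
    qed
    finally show ?thesis unfolding K_def N_def .
  qed
qed

end


definition compo :: "enat \<Rightarrow> (nat \<Rightarrow> nat) \<Rightarrow> nat \<Rightarrow> (nat \<Rightarrow> nat) \<Rightarrow> nat \<Rightarrow> edges \<Rightarrow> edges" where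
  "compo \<tau> X n \<sigma> k b = mapE (rr \<tau> X n \<sigma> k b) (rr \<tau> X n \<sigma> (Suc k) b) (lvl X (n + k) b)"

lemma compo_dep:
  assumes "n + k < N"
  shows "compo \<tau> X n \<sigma> k (edges_before X N b) = compo \<tau> X n \<sigma> k b"
proof -
  have "rr \<tau> X n \<sigma> k (edges_before X N b) = rr \<tau> X n \<sigma> k b"
    by (rule rr_dep) (use assms in \<open>simp add: lvl_edges_before\<close>)
  moreover have "rr \<tau> X n \<sigma> (Suc k) (edges_before X N b) = rr \<tau> X n \<sigma> (Suc k) b"
    by (rule rr_dep) (use assms in \<open>simp add: lvl_edges_before\<close>)
  moreover have "lvl X (n + k) (edges_before X N b) = lvl X (n + k) b"
    using assms by (simp add: lvl_edges_before)
  ultimately show ?thesis unfolding compo_def by simp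
qed

lemma CC_dep:
  "e \<in> CC \<tau> X n \<sigma> b \<longleftrightarrow> e \<in> CC \<tau> X n \<sigma> (edges_before X (Suc (fst (fst e))) b)"
proof -
  have "e \<in> CC \<tau> X n \<sigma> c \<longleftrightarrow> (\<exists>k. n + k = fst (fst e) \<and> e \<in> compo \<tau> X n \<sigma> k c)" for c
  proof -
    have "e \<in> compo \<tau> X n \<sigma> k c \<Longrightarrow> fst (fst e) = n + k" for k
      unfolding compo_def by (rule mapE_lvl_fst)
    then show ?thesis unfolding CC_def compo_def[symmetric] by (auto simp del: compo_def)
  qed
  moreover have "n + k = fst (fst e) \<Longrightarrow> compo \<tau> X n \<sigma> k (edges_before X (Suc (fst (fst e))) b) = compo \<tau> X n \<sigma> k b" for k
    by (rule compo_dep) simp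
  ultimately show ?thesis by auto
qed

lemma CC_meas: "CC \<tau> X n \<sigma> \<in> edge_space \<rightarrow>\<^sub>M edge_space"
proof -
  have "CC \<tau> X n \<sigma> \<in> edge_space \<rightarrow>\<^sub>M sigma UNIV (range (\<lambda>e. {E. e \<in> E}))"
  proof (rule measurable_measure_of)
    fix y assume "y \<in> range (\<lambda>e. {E. e \<in> (E :: edges)})"
    then obtain e where y: "y = {E. e \<in> E}" by blast
    have "CC \<tau> X n \<sigma> -` y \<inter> space edge_space
        = {b. (\<lambda>c. e \<in> CC \<tau> X n \<sigma> c) (b \<inter> (\<Union>m<Suc (fst (fst e)). gen X m \<times> gen X (Suc m)))}"
      unfolding y using CC_dep[of e \<tau> X n \<sigma>] unfolding edges_before_def by auto
    also have "\<dots> \<in> sets edge_space" by (rule fin_dep_sets[OF finite_eb_set])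
    finally show "CC \<tau> X n \<sigma> -` y \<inter> space edge_space \<in> sets edge_space" .
  qed auto
  then show ?thesis unfolding edge_space_def .
qed

context gsetup
begin

lemma claim:
  assumes \<sigma>1: "\<sigma>1 permutes {1..X n}" and \<sigma>2: "\<sigma>2 permutes {1..X n}"
  shows "measure M {\<omega> \<in> space M. Q (Dt \<tau> X n \<sigma>1 K (E \<omega>))} = measure M {\<omega> \<in> space M. Q (Dt \<tau> X n \<sigma>2 K (E \<omega>))}"
proof (induction K arbitrary: Q)
  case 0
  have "Dt \<tau> X n \<sigma>1 0 b = Dt \<tau> X n \<sigma>2 0 b" for b unfolding Dt_def by simp
  then show ?case by simp
next
  case (Suc K)
  have ih: "measure M {\<omega> \<in> space M. Q ((Dt \<tau> X n \<sigma>1 K (E \<omega>))(K := \<kappa>))}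
      = measure M {\<omega> \<in> space M. Q ((Dt \<tau> X n \<sigma>2 K (E \<omega>))(K := \<kappa>))}" for \<kappa>
    using Suc.IH[of "\<lambda>d. Q (d(K := \<kappa>))"] by simp
  show ?case unfolding decomp[OF \<sigma>1] decomp[OF \<sigma>2] ih ..
qed

lemma law_eq:
  assumes \<sigma>1: "\<sigma>1 permutes {1..X n}" and \<sigma>2: "\<sigma>2 permutes {1..X n}"
  shows "distr M edge_space (\<lambda>\<omega>. CC \<tau> X n \<sigma>1 (E \<omega>)) = distr M edge_space (\<lambda>\<omega>. CC \<tau> X n \<sigma>2 (E \<omega>))"
proof -
  have mf: "(\<lambda>\<omega>. CC \<tau> X n \<sigma> (E \<omega>)) \<in> M \<rightarrow>\<^sub>M edge_space" for \<sigma>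
    using measurable_comp[OF meas CC_meas] by (simp add: o_def)
  have key: "measure M {\<omega> \<in> space M. F \<subseteq> CC \<tau> X n \<sigma> (E \<omega>)}
      = measure M {\<omega> \<in> space M. (\<lambda>d. F \<subseteq> (\<Union>k\<in>{..<Suc (\<Sum>e\<in>F. fst (fst e))}. canon \<tau> X (n + k) (d k)))
          (Dt \<tau> X n \<sigma> (Suc (\<Sum>e\<in>F. fst (fst e))) (E \<omega>))}"
    if F: "finite F" and \<sigma>: "\<sigma> permutes {1..X n}" for F \<sigma>
  proof -
    define K where "K = Suc (\<Sum>e\<in>F. fst (fst e))"
    have FK: "\<forall>e\<in>F. fst (fst e) < n + K"
    proof
      fix e assume "e \<in> F"
      then have "fst (fst e) \<le> (\<Sum>e\<in>F. fst (fst e))" by (rule member_le_sum) (simp_all add: F)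
      then show "fst (fst e) < n + K" unfolding K_def by simp
    qed
    have "{\<omega> \<in> space M. F \<subseteq> CC \<tau> X n \<sigma> (E \<omega>)}
      = {\<omega> \<in> space M. F \<subseteq> (\<Union>k\<in>{..<K}. canon \<tau> X (n + k) (Dt \<tau> X n \<sigma> K (E \<omega>) k))}"
    proof -
      have "Dt \<tau> X n \<sigma> K b k = DD \<tau> X n \<sigma> k b" if "k \<in> {..<K}" for k b
        using that unfolding Dt_def by simp
      then have eqU: "(\<Union>k\<in>{..<K}. canon \<tau> X (n + k) (Dt \<tau> X n \<sigma> K b k))
          = (\<Union>k\<in>{..<K}. canon \<tau> X (n + k) (DD \<tau> X n \<sigma> k b))" for b by simp
      have "F \<subseteq> CC \<tau> X n \<sigma> (E \<omega>) \<longleftrightarrow> F \<subseteq> (\<Union>k\<in>{..<K}. canon \<tau> X (n + k) (Dt \<tau> X n \<sigma> K (E \<omega>) k))"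
        if "\<omega> \<in> space M" for \<omega>
        unfolding eqU by (rule CC_subset_iff[OF gb[OF that] \<sigma> FK])
      then show ?thesis by blast
    qed
    then show ?thesis unfolding K_def by simp
  qed
  show ?thesis
  proof (rule prob_eq_edge_space)
    show "prob_space (distr M edge_space (\<lambda>\<omega>. CC \<tau> X n \<sigma>1 (E \<omega>)))"
      by (rule prob_space_distr[OF mf])
    show "prob_space (distr M edge_space (\<lambda>\<omega>. CC \<tau> X n \<sigma>2 (E \<omega>)))"
      by (rule prob_space_distr[OF mf])
    fix F :: edges assume F: "finite F"
    have sF: "{b. F \<subseteq> b} \<in> sets edge_space"
      using fin_dep_sets[OF F, of "\<lambda>c. F \<subseteq> c"] by simp
    have "measure (distr M edge_space (\<lambda>\<omega>. CC \<tau> X n \<sigma> (E \<omega>))) {b. F \<subseteq> b}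
        = measure M {\<omega> \<in> space M. F \<subseteq> CC \<tau> X n \<sigma> (E \<omega>)}" for \<sigma>
      using measure_distr[OF mf sF] by (simp add: vimage_def Int_def conj_commute)
    then show "measure (distr M edge_space (\<lambda>\<omega>. CC \<tau> X n \<sigma>1 (E \<omega>))) {b. F \<subseteq> b}
        = measure (distr M edge_space (\<lambda>\<omega>. CC \<tau> X n \<sigma>2 (E \<omega>))) {b. F \<subseteq> b}"
      using key[OF F \<sigma>1] key[OF F \<sigma>2] claim[OF \<sigma>1 \<sigma>2] by simp
  qed simp_all
qed

end


theorem proposition3p4:
  fixes M :: "'w measure" and \<tau> :: enat and X :: "nat \<Rightarrow> nat"
    and k :: "nat \<Rightarrow> nat \<Rightarrow> nat" and \<E> :: "'w \<Rightarrow> edges"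
  assumes "prob_space M"
    and "\<And>n. enat n < \<tau> \<Longrightarrow> X n \<ge> 1"
    and "\<And>n. enat (Suc n) < \<tau> \<Longrightarrow> (\<Sum>i\<in>{1..X n}. k n i) = X (Suc n)"
    and "\<E> \<in> measurable M edge_space"
    and "\<And>\<omega>. \<omega> \<in> space M \<Longrightarrow> genealogy \<tau> X k (\<E> \<omega>)"
    and "forward_neutral M \<tau> X \<E>"
    and "enat n < \<tau>"
  shows "exchangeable_vec M edge_space (gen X n) (tree_vec X n) \<E>"
proof -
  interpret gsetup M \<tau> X k \<E> using assms(1,4,5,6) unfolding gsetup_def by blast
  have gb: "\<And>\<omega>. \<omega> \<in> space M \<Longrightarrow> genealogy \<tau> X k (\<E> \<omega>)" by (rule assms(5))
  show ?thesis unfolding exchangeable_vec_def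
  proof (intro allI impI)
    fix \<pi> A
    assume \<pi>: "\<pi> permutes gen X n"
      and mA: "{b \<in> space edge_space. tree_vec X n b \<in> A} \<in> sets edge_space"
    define \<sigma> where "\<sigma> i = (if i \<in> {1..X n} then snd (\<pi> (n, i)) else i)" for i
    have \<pi>g: "\<pi> (n, i) \<in> gen X n" if "i \<in> {1..X n}" for i
      using permutes_in_image[OF \<pi>] that by simp
    have \<pi>\<sigma>: "\<pi> (n, i) = (n, \<sigma> i)" if i: "i \<in> {1..X n}" for i
    proof -
      obtain a j where aj: "\<pi> (n, i) = (a, j)" by force
      then have "a = n" using \<pi>g[OF i] by simp
      then show ?thesis using aj i unfolding \<sigma>_def by simp
    qed
    have \<sigma>r: "\<sigma> i \<in> {1..X n}" if i: "i \<in> {1..X n}" for i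
      using \<pi>g[OF i] \<pi>\<sigma>[OF i] by simp
    have \<sigma>p: "\<sigma> permutes {1..X n}"
    proof (rule bij_imp_permutes)
      show "bij_betw \<sigma> {1..X n} {1..X n}" unfolding bij_betw_def
      proof (intro conjI inj_onI subset_antisym subsetI)
        fix i j assume ij: "i \<in> {1..X n}" "j \<in> {1..X n}" "\<sigma> i = \<sigma> j"
        then have "\<pi> (n, i) = \<pi> (n, j)" using \<pi>\<sigma> by simp
        then have "(n, i) = (n, j)" by (rule injD[OF permutes_inj[OF \<pi>]])
        then show "i = j" by simp
      next
        fix y assume "y \<in> \<sigma> ` {1..X n}"
        then obtain i where "i \<in> {1..X n}" "y = \<sigma> i" by (rule imageE)
        then show "y \<in> {1..X n}" using \<sigma>r by simp
      next
        fix y assume y: "y \<in> {1..X n}"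
        then have "(n, y) \<in> \<pi> ` gen X n" using permutes_image[OF \<pi>] by simp
        then obtain v where v: "(n, y) = \<pi> v" "v \<in> gen X n" by (rule imageE)
        obtain a i where ai: "v = (a, i)" by force
        then have i: "v = (n, i)" "i \<in> {1..X n}" using v(2) by simp_all
        then have "\<sigma> i = y" using v(1) \<pi>\<sigma>[OF i(2)] by simp
        then show "y \<in> \<sigma> ` {1..X n}" using i(2) by (metis imageI)
      qed
    qed (auto simp: \<sigma>_def)
    define \<sigma>' where "\<sigma>' = inv \<sigma>"
    have \<sigma>'p: "\<sigma>' permutes {1..X n}" unfolding \<sigma>'_def by (rule permutes_inv[OF \<sigma>p])
    have eq1: "tree_vec X n (\<E> \<omega>) = tree_vec X n (CC \<tau> X n id (\<E> \<omega>))" if \<omega>: "\<omega> \<in> space M" for \<omega>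
    proof
      fix v :: vertex
      obtain a j where v: "v = (a, j)" by force
      show "tree_vec X n (\<E> \<omega>) v = tree_vec X n (CC \<tau> X n id (\<E> \<omega>)) v"
      proof (cases "v \<in> gen X n")
        case True
        then have "a = n" "j \<in> {1..X n}" using v by auto
        then show ?thesis using tree_vec_CC[OF gb[OF \<omega>] permutes_id, of j] v by simp
      next
        case False then show ?thesis unfolding tree_vec_def by simp
      qed
    qed
    have eq2: "(\<lambda>v. tree_vec X n (\<E> \<omega>) (\<pi> v)) = tree_vec X n (CC \<tau> X n \<sigma>' (\<E> \<omega>))" if \<omega>: "\<omega> \<in> space M" for \<omega>
    proof
      fix v :: vertex
      obtain a j where v: "v = (a, j)" by force
      show "tree_vec X n (\<E> \<omega>) (\<pi> v) = tree_vec X n (CC \<tau> X n \<sigma>' (\<E> \<omega>)) v"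
      proof (cases "v \<in> gen X n")
        case True
        then have aj: "a = n" "j \<in> {1..X n}" using v by auto
        have "\<sigma>' (\<sigma> j) = j" unfolding \<sigma>'_def using permutes_inverses(2)[OF \<sigma>p] by simp
        then have "tree_vec X n (CC \<tau> X n \<sigma>' (\<E> \<omega>)) (n, j) = tree_vec X n (\<E> \<omega>) (n, \<sigma> j)"
          using tree_vec_CC[OF gb[OF \<omega>] \<sigma>'p \<sigma>r[OF aj(2)]] by simp
        then show ?thesis using v aj \<pi>\<sigma>[OF aj(2)] by simp
      next
        case False
        then have "\<pi> v = v" using \<pi> unfolding permutes_def by blast
        then show ?thesis using False unfolding tree_vec_def by simp
      qed
    qed
    define BA where "BA = {b. tree_vec X n b \<in> A}"
    have BA: "BA \<in> sets edge_space" using mA unfolding BA_def by simp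
    have mf: "(\<lambda>\<omega>. CC \<tau> X n s (\<E> \<omega>)) \<in> M \<rightarrow>\<^sub>M edge_space" for s
      using measurable_comp[OF assms(4) CC_meas] by (simp add: o_def)
    have "measure M {\<omega> \<in> space M. tree_vec X n (\<E> \<omega>) \<in> A}
        = measure M ((\<lambda>\<omega>. CC \<tau> X n id (\<E> \<omega>)) -` BA \<inter> space M)"
      using eq1 unfolding BA_def by (intro arg_cong[where f="measure M"]) auto
    also have "\<dots> = measure (distr M edge_space (\<lambda>\<omega>. CC \<tau> X n id (\<E> \<omega>))) BA"
      by (rule measure_distr[OF mf BA, symmetric])
    also have "\<dots> = measure (distr M edge_space (\<lambda>\<omega>. CC \<tau> X n \<sigma>' (\<E> \<omega>))) BA"
      using law_eq[OF permutes_id \<sigma>'p] by simp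
    also have "\<dots> = measure M ((\<lambda>\<omega>. CC \<tau> X n \<sigma>' (\<E> \<omega>)) -` BA \<inter> space M)"
      by (rule measure_distr[OF mf BA])
    also have "\<dots> = measure M {\<omega> \<in> space M. (\<lambda>i. tree_vec X n (\<E> \<omega>) (\<pi> i)) \<in> A}"
      using eq2 unfolding BA_def by (intro arg_cong[where f="measure M"]) auto
    finally show "measure M {\<omega> \<in> space M. tree_vec X n (\<E> \<omega>) \<in> A}
        = measure M {\<omega> \<in> space M. (\<lambda>i. tree_vec X n (\<E> \<omega>) (\<pi> i)) \<in> A}" .
  qed
qed

end
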